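(* Let $1<p<\infty$ and $\alpha\in\mathbb R$. There is $C>0$ such that for all $N\ge1$, all $A\subset\mathbb Z$ with $|A|\le N$, and all scalars $|\varepsilon_n|\le1$, $$\Big\|\sum_{n\in A}\varepsilon_ne^{inx}\Big\|_{L^p(\log L)^\alpha(\mathbb T)}\le C\max\Big\{N^{1/2},\ N^{1-\frac1p}(\log(e+N))^\alpha\Big\}.$$
   Context: $\mathbb T\equiv[-\pi,\pi)$. $L^p(\log L)^\alpha(\mathbb T)$ is the Orlicz space $L^\Phi$ with $\Phi(t)=\int_0^ts^{p-1}(\log(c+s))^{\alpha p}ds$ ($c>1$ fixed large enough that $\Phi$ is a Young function), with Luxemburg norm $\inf\{\lambda>0:\int_{\mathbb T}\Phi(|f|/\lambda)\le1\}$. *)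

theory Defs
  imports "HOL-Analysis.Analysis"
begin

definition LlogL_Phi :: "real \<Rightarrow> real \<Rightarrow> real \<Rightarrow> real \<Rightarrow> real" where
  "LlogL_Phi p \<alpha> c t = integral {0..t} (\<lambda>s. s powr (p - 1) * (ln (c + s)) powr (\<alpha> * p))"

definition young_function :: "(real \<Rightarrow> real) \<Rightarrow> bool" where
  "young_function \<Phi> \<longleftrightarrow> convex_on {0..} \<Phi> \<and> \<Phi> 0 = 0 \<and> (\<forall>t>0. \<Phi> t > 0)
     \<and> filterlim \<Phi> at_top at_top"

definition luxemburg_norm :: "(real \<Rightarrow> real) \<Rightarrow> (real \<Rightarrow> complex) \<Rightarrow> real" where
  "luxemburg_norm \<Phi> f = Inf {l::real. l > 0 \<and>
      (\<integral>\<^sup>+ x \<in> {-pi..<pi}. ennreal (\<Phi> (norm (f x) / l)) \<partial>lborel) \<le> 1}"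

definition LplogL_norm :: "real \<Rightarrow> real \<Rightarrow> real \<Rightarrow> (real \<Rightarrow> complex) \<Rightarrow> real" where
  "LplogL_norm p \<alpha> c f = luxemburg_norm (LlogL_Phi p \<alpha> c) f"

end

theory Submission
  imports Defs "HOL-Real_Asymp.Real_Asymp"
begin

lemma cis_kpi: fixes k::int shows "cis (of_int k * pi) = cis (- (of_int k * pi))"
proof -
  have "cis (of_int k * pi) = cis (- (of_int k * pi)) * cis (2*pi* real_of_int k)"
    by (simp add: cis_mult algebra_simps)
  also have "\<dots> = cis (- (of_int k * pi))" by simp
  finally show ?thesis .
qed

lemma cis_int_has_integral:
  fixes k :: int
  shows "((\<lambda>x. cis (of_int k * x)) has_integral (if k = 0 then complex_of_real (2*pi) else 0)) {-pi..pi}"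
proof (cases "k = 0")
  case True
  then show ?thesis using has_integral_const_real[of "1::complex" "-pi" pi] by (simp add: scaleR_conv_of_real)
next
  case False
  define F where "F x = cis (of_int k * x) / (\<i> * of_int k)" for x
  have d: "(F has_vector_derivative cis (of_int k * x)) (at x within {-pi..pi})" for x
  proof -
    define G where "G z = exp (\<i> * of_int k * z) / (\<i> * of_int k)" for z :: complex
    have "(G has_field_derivative exp (\<i> * of_int k * of_real x)) (at (of_real x))"
      unfolding G_def using False
      by (auto intro!: derivative_eq_intros simp: field_simps)
    from has_vector_derivative_real_field[OF this]
    have "((\<lambda>x. G (of_real x)) has_vector_derivative cis (of_int k * x)) (at x within {-pi..pi})"
      by (simp add: cis_conv_exp mult.assoc)
    then show ?thesis unfolding F_def G_def by (simp add: cis_conv_exp mult.assoc)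
  qed
  have "((\<lambda>x. cis (of_int k * x)) has_integral (F pi - F (-pi))) {-pi..pi}"
    by (rule fundamental_theorem_of_calculus) (use d in auto)
  moreover have "F pi - F (-pi) = 0" unfolding F_def using cis_kpi[of k] by simp
  ultimately show ?thesis using False by simp
qed
lemma parseval_sum:
  fixes A :: "int set" and \<epsilon> :: "int \<Rightarrow> complex"
  assumes "finite A"
  shows "((\<lambda>x. (norm (\<Sum>n\<in>A. \<epsilon> n * cis (of_int n * x)))^2) has_integral
            (2*pi*(\<Sum>n\<in>A. (norm (\<epsilon> n))^2))) {-pi..pi}"
proof -
  define f where "f x = (\<Sum>n\<in>A. \<epsilon> n * cis (of_int n * x))" for x
  have eq: "f x * cnj (f x) = (\<Sum>n\<in>A. \<Sum>m\<in>A. (\<epsilon> n * cnj (\<epsilon> m)) * cis (of_int (n - m) * x))" for x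
  proof -
    have "f x * cnj (f x) = (\<Sum>n\<in>A. \<Sum>m\<in>A. (\<epsilon> n * cis (of_int n * x)) * cnj (\<epsilon> m * cis (of_int m * x)))"
      unfolding f_def by (simp add: sum_distrib_left sum_distrib_right cnj_sum) (rule sum.swap)
    also have "\<dots> = (\<Sum>n\<in>A. \<Sum>m\<in>A. (\<epsilon> n * cnj (\<epsilon> m)) * cis (of_int (n - m) * x))"
      by (intro sum.cong refl) (simp add: cis_cnj cis_mult algebra_simps)
    finally show ?thesis .
  qed
  have "((\<lambda>x. \<Sum>n\<in>A. \<Sum>m\<in>A. (\<epsilon> n * cnj (\<epsilon> m)) * cis (of_int (n - m) * x)) has_integral
        (\<Sum>n\<in>A. \<Sum>m\<in>A. (\<epsilon> n * cnj (\<epsilon> m)) * (if n - m = 0 then complex_of_real (2*pi) else 0))) {-pi..pi}"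
    by (intro has_integral_sum assms has_integral_mult_right cis_int_has_integral)
  also have "(\<Sum>n\<in>A. \<Sum>m\<in>A. (\<epsilon> n * cnj (\<epsilon> m)) * (if n - m = 0 then complex_of_real (2*pi) else 0))
     = (\<Sum>n\<in>A. (\<epsilon> n * cnj (\<epsilon> n)) * complex_of_real (2*pi))"
    using assms by (simp add: if_distrib sum.delta cong: if_cong)
  finally have I: "((\<lambda>x. f x * cnj (f x)) has_integral (\<Sum>n\<in>A. (\<epsilon> n * cnj (\<epsilon> n)) * complex_of_real (2*pi))) {-pi..pi}"
    using eq by simp
  have "((\<lambda>x. Re (f x * cnj (f x))) has_integral Re (\<Sum>n\<in>A. (\<epsilon> n * cnj (\<epsilon> n)) * complex_of_real (2*pi))) {-pi..pi}"
    by (rule has_integral_Re[OF I])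
  moreover have "Re (f x * cnj (f x)) = (norm (f x))^2" for x
    by (simp add: complex_mult_cnj cmod_def)
  moreover have "Re (\<Sum>n\<in>A. (\<epsilon> n * cnj (\<epsilon> n)) * complex_of_real (2*pi)) = 2*pi*(\<Sum>n\<in>A. (norm (\<epsilon> n))^2)"
    by (simp add: complex_mult_cnj cmod_def sum_distrib_left mult.commute)
  ultimately show ?thesis unfolding f_def by simp
qed


lemma lux_le:
  fixes \<Phi> :: "real \<Rightarrow> real" and f :: "real \<Rightarrow> complex"
  assumes lpos: "lam > 0" and bnd: "\<And>u. 0 \<le> u \<Longrightarrow> u \<le> M \<Longrightarrow> \<Phi> u \<le> a + b * u^2"
    and a: "a \<ge> 0" and b: "b \<ge> 0" and fM: "\<And>x. norm (f x) / lam \<le> M"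
    and I: "((\<lambda>x. (norm (f x))^2) has_integral I) {-pi..pi}"
    and tot: "2*pi*a + b * I / lam^2 \<le> 1"
  shows "luxemburg_norm \<Phi> f \<le> lam"
proof -
  have hI: "((\<lambda>x. a + (b / lam^2) * (norm (f x))^2) has_integral (2*pi*a + b * I / lam^2)) {-pi..pi}"
  proof -
    have "((\<lambda>x. a) has_integral (2*pi) *\<^sub>R a) {-pi..pi}"
      using has_integral_const_real[of a "-pi" pi] by simp
    moreover have "((\<lambda>x. (b / lam^2) * (norm (f x))^2) has_integral (b / lam^2) * I) {-pi..pi}"
      by (rule has_integral_mult_right[OF I])
    ultimately show ?thesis by (auto dest: has_integral_add)
  qed
  have nn: "(\<integral>\<^sup>+ x. ennreal (indicator {-pi..pi} x * (a + (b / lam^2) * (norm (f x))^2)) \<partial>lborel)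
      = ennreal (2*pi*a + b * I / lam^2)"
    by (rule nn_integral_has_integral_lebesgue[OF _ hI]) (use a b in auto)
  have "(\<integral>\<^sup>+ x \<in> {-pi..<pi}. ennreal (\<Phi> (norm (f x) / lam)) \<partial>lborel)
     \<le> (\<integral>\<^sup>+ x. ennreal (indicator {-pi..pi} x * (a + (b / lam^2) * (norm (f x))^2)) \<partial>lborel)"
  proof (rule nn_integral_mono)
    fix x
    show "ennreal (\<Phi> (norm (f x) / lam)) * indicator {-pi..<pi} x
       \<le> ennreal (indicator {-pi..pi} x * (a + (b / lam^2) * (norm (f x))^2))"
    proof (cases "x \<in> {-pi..<pi}")
      case True
      have "\<Phi> (norm (f x) / lam) \<le> a + b * (norm (f x) / lam)^2"
        by (rule bnd) (use lpos fM in auto)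
      also have "\<dots> = a + (b / lam^2) * (norm (f x))^2" by (simp add: power_divide)
      finally show ?thesis using True by (auto intro: ennreal_leI)
    next
      case False then show ?thesis by simp
    qed
  qed
  also have "\<dots> \<le> 1" using nn tot by simp
  finally have mem: "lam \<in> {l::real. l > 0 \<and>
      (\<integral>\<^sup>+ x \<in> {-pi..<pi}. ennreal (\<Phi> (norm (f x) / l)) \<partial>lborel) \<le> 1}" using lpos by simp
  show ?thesis unfolding luxemburg_norm_def
    by (rule cInf_lower[OF mem]) (auto intro: bdd_belowI[where m=0])
qed


lemma Phi_le_const:
  assumes u: "u \<ge> 0" and B: "B \<ge> 0"
    and le: "\<And>s. 0 \<le> s \<Longrightarrow> s \<le> u \<Longrightarrow> s powr (p - 1) * (ln (c + s)) powr (\<alpha> * p) \<le> B"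
  shows "LlogL_Phi p \<alpha> c u \<le> B * u"
proof (cases "(\<lambda>s. s powr (p - 1) * (ln (c + s)) powr (\<alpha> * p)) integrable_on {0..u}")
  case True
  have "integral {0..u} (\<lambda>s. s powr (p - 1) * (ln (c + s)) powr (\<alpha> * p)) \<le> integral {0..u} (\<lambda>s. B)"
    by (rule integral_le[OF True]) (use le in auto)
  also have "\<dots> = B * u" using u by simp
  finally show ?thesis unfolding LlogL_Phi_def .
next
  case False
  then show ?thesis unfolding LlogL_Phi_def using u B by (simp add: not_integrable_integral)
qed



lemma split_pow2:
  fixes u q :: real assumes "u > 0" shows "u powr q = u powr (q - 2) * u^2"
proof -
  have "u powr q = u powr ((q - 2) + 2)" by simp
  also have "\<dots> = u powr (q - 2) * u powr 2" by (rule powr_add)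
  then show ?thesis using assms by (simp add: powr_numeral)
qed

lemma G_lemma:
  fixes q eta M u :: real
  assumes q: "q > 0" and eta: "eta > 0" and u: "0 \<le> u" "u \<le> M"
  shows "u powr q \<le> eta powr q + (eta powr (q - 2) + M powr (q - 2)) * u^2"
proof (cases "u \<le> eta")
  case True
  have "u powr q \<le> eta powr q" using True u q by (intro powr_mono2) auto
  moreover have "0 \<le> (eta powr (q - 2) + M powr (q - 2)) * u^2" by simp
  ultimately show ?thesis by linarith
next
  case False
  then have up: "u > 0" using eta by simp
  have "u powr (q - 2) \<le> eta powr (q - 2) + M powr (q - 2)"
  proof (cases "q \<le> 2")
    case True
    have "u powr (q - 2) \<le> eta powr (q - 2)" using True False eta by (intro powr_mono2') auto
    then show ?thesis by (smt (verit) powr_ge_zero)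
  next
    case False2: False
    have "u powr (q - 2) \<le> M powr (q - 2)" using False2 u up by (intro powr_mono2) auto
    then show ?thesis by (smt (verit) powr_ge_zero)
  qed
  then have "u powr (q - 2) * u^2 \<le> (eta powr (q - 2) + M powr (q - 2)) * u^2"
    by (intro mult_right_mono) auto
  then show ?thesis using split_pow2[OF up, of q] by (smt (verit) powr_ge_zero)
qed

lemma bounded_powr_log:
  fixes a g :: real assumes a: "a < 0"
  shows "\<exists>T>0. \<forall>x\<ge>1. x powr a * ln (exp 1 + x) powr g \<le> T"
proof -
  have "((\<lambda>x::real. x powr a * ln (exp 1 + x) powr g) \<longlongrightarrow> 0) at_top"
    using a by real_asymp
  then have "eventually (\<lambda>x. x powr a * ln (exp 1 + x) powr g < 1) at_top"
    by (rule order_tendstoD) simp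
  then obtain U where U: "\<And>x. x \<ge> U \<Longrightarrow> x powr a * ln (exp 1 + x) powr g < 1"
    by (auto simp: eventually_at_top_linorder)
  define T where "T = 1 + ln (exp 1 + max 1 U) powr \<bar>g\<bar>"
  have Tpos: "T > 0" unfolding T_def by (smt (verit) powr_ge_zero)
  have "x powr a * ln (exp 1 + x) powr g \<le> T" if x: "x \<ge> 1" for x
  proof (cases "x \<ge> U")
    case True then show ?thesis using U[OF True] unfolding T_def by (smt (verit) powr_ge_zero)
  next
    case False
    have l1: "ln (exp 1 + x) \<ge> 1"
    proof -
      have "exp 1 + x \<ge> exp 1" using x by simp
      then have "ln (exp 1 + x) \<ge> ln (exp 1)" by (intro ln_mono) auto
      then show ?thesis by simp
    qed
    have "x powr a \<le> x powr 0" using x a by (intro powr_mono) auto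
    then have xa: "x powr a \<le> 1" using x by simp
    have "ln (exp 1 + x) powr g \<le> ln (exp 1 + x) powr \<bar>g\<bar>" using l1 by (intro powr_mono) auto
    also have "\<dots> \<le> ln (exp 1 + max 1 U) powr \<bar>g\<bar>"
      using False x l1 exp_gt_zero[of "1::real"] by (intro powr_mono2 ln_mono) linarith+
    finally have lb: "ln (exp 1 + x) powr g \<le> ln (exp 1 + max 1 U) powr \<bar>g\<bar>" .
    have "x powr a * ln (exp 1 + x) powr g \<le> 1 * ln (exp 1 + max 1 U) powr \<bar>g\<bar>"
      by (intro mult_mono xa lb) auto
    then show ?thesis unfolding T_def by simp
  qed
  then show ?thesis using Tpos by blast
qed


lemma ln_sqrt_half:
  fixes c u :: real assumes c: "c > 1" and u: "u \<ge> 0"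
  shows "ln (c + u) / 2 \<le> ln (c + sqrt u)"
proof -
  have e: "(c + sqrt u)^2 = c^2 + 2 * c * sqrt u + u" using u by (simp add: power2_eq_square algebra_simps)
  have "c \<le> c^2" using c by (simp add: power2_eq_square)
  moreover have "0 \<le> 2 * c * sqrt u" using c u by simp
  ultimately have "c + u \<le> (c + sqrt u)^2" unfolding e by linarith
  then have "ln (c + u) \<le> ln ((c + sqrt u)^2)" using c u by (intro ln_mono) auto
  also have "\<dots> = 2 * ln (c + sqrt u)" using c by (subst ln_realpow) auto
  finally show ?thesis by simp
qed

lemma powr_times_self:
  fixes u p :: real assumes "u \<ge> 0" "p > 1"
  shows "u powr (p - 1) * u = u powr p"
proof (cases "u = 0")
  case True then show ?thesis by simp
next
  case False
  have "u powr (p - 1) * u powr 1 = u powr p" by (subst powr_add[symmetric]) simp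
  moreover have "u powr 1 = u" using False assms by simp
  ultimately show ?thesis by simp
qed



lemma PhiA:
  assumes p: "p > 1" and c: "c > 1" and a: "\<alpha> \<ge> 0" and u: "u \<ge> 0"
  shows "LlogL_Phi p \<alpha> c u \<le> u powr p * ln (c + u) powr (\<alpha> * p)"
proof -
  have "LlogL_Phi p \<alpha> c u \<le> (u powr (p - 1) * ln (c + u) powr (\<alpha> * p)) * u"
  proof (rule Phi_le_const[OF u])
    show "0 \<le> u powr (p - 1) * ln (c + u) powr (\<alpha> * p)" by simp
    fix s assume s: "0 \<le> s" "s \<le> u"
    have l: "0 \<le> ln (c + s)" "ln (c + s) \<le> ln (c + u)" using c s by auto
    show "s powr (p - 1) * ln (c + s) powr (\<alpha> * p) \<le> u powr (p - 1) * ln (c + u) powr (\<alpha> * p)"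
      using s p a l by (intro mult_mono powr_mono2) auto
  qed
  also have "\<dots> = u powr p * ln (c + u) powr (\<alpha> * p)"
    using powr_times_self[OF u p] by (simp add: algebra_simps)
  finally show ?thesis .
qed



lemma PhiB:
  assumes p: "p > 1" and c: "c > 1" and a: "\<alpha> < 0" and u: "u \<ge> 0"
  shows "LlogL_Phi p \<alpha> c u \<le> ln c powr (\<alpha> * p) * u powr p"
proof -
  have "LlogL_Phi p \<alpha> c u \<le> (u powr (p - 1) * ln c powr (\<alpha> * p)) * u"
  proof (rule Phi_le_const[OF u])
    show "0 \<le> u powr (p - 1) * ln c powr (\<alpha> * p)" by simp
    fix s assume s: "0 \<le> s" "s \<le> u"
    have l: "0 < ln c" "ln c \<le> ln (c + s)" using c s by auto
    have "ln (c + s) powr (\<alpha> * p) \<le> ln c powr (\<alpha> * p)"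
      using l a p by (intro powr_mono2') (auto intro: mult_nonpos_nonneg)
    then show "s powr (p - 1) * ln (c + s) powr (\<alpha> * p) \<le> u powr (p - 1) * ln c powr (\<alpha> * p)"
    proof -
      have "s powr (p - 1) \<le> u powr (p - 1)" using s p by (intro powr_mono2) auto
      then show ?thesis using \<open>ln (c + s) powr (\<alpha> * p) \<le> ln c powr (\<alpha> * p)\<close> by (intro mult_mono) auto
    qed
  qed
  also have "\<dots> = ln c powr (\<alpha> * p) * u powr p"
    using powr_times_self[OF u p] by (simp add: algebra_simps)
  finally show ?thesis .
qed



lemma PhiC:
  assumes p: "p > 1" and c: "c > 1" and a: "\<alpha> < 0" and u: "u \<ge> 0"
  shows "LlogL_Phi p \<alpha> c u \<le> ln c powr (\<alpha> * p) * u powr ((p + 1) / 2)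
            + 2 powr (-(\<alpha> * p)) * (u powr p * ln (c + u) powr (\<alpha> * p))"
proof -
  define \<beta> where "\<beta> = \<alpha> * p"
  have b: "\<beta> < 0" unfolding \<beta>_def using a p by (simp add: mult_neg_pos)
  define B where "B = ln c powr \<beta> * u powr ((p - 1) / 2) + 2 powr (-\<beta>) * (u powr (p - 1) * ln (c + u) powr \<beta>)"
  have "LlogL_Phi p \<alpha> c u \<le> B * u"
  proof (rule Phi_le_const[OF u])
    show "0 \<le> B" unfolding B_def by simp
    fix s assume s: "0 \<le> s" "s \<le> u"
    have l: "0 < ln c" "ln c \<le> ln (c + s)" using c s by auto
    show "s powr (p - 1) * ln (c + s) powr (\<alpha> * p) \<le> B"
    proof (cases "s \<le> sqrt u")
      case True
      have "ln (c + s) powr \<beta> \<le> ln c powr \<beta>" using l b by (intro powr_mono2') auto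
      moreover have "s powr (p - 1) \<le> (sqrt u) powr (p - 1)" using True s p by (intro powr_mono2) auto
      moreover have "(sqrt u) powr (p - 1) = u powr ((p - 1) / 2)"
        using u by (simp add: powr_half_sqrt[symmetric] powr_powr)
      ultimately have "s powr (p - 1) * ln (c + s) powr \<beta> \<le> u powr ((p - 1) / 2) * ln c powr \<beta>"
        by (metis mult_mono powr_ge_zero)
      then have "s powr (p - 1) * ln (c + s) powr \<beta> \<le> ln c powr \<beta> * u powr ((p - 1) / 2)"
        by (simp add: mult.commute)
      moreover have "0 \<le> 2 powr (-\<beta>) * (u powr (p - 1) * ln (c + u) powr \<beta>)" by simp
      ultimately show ?thesis unfolding B_def \<beta>_def[symmetric] by linarith
    next
      case False
      have half: "ln (c + u) / 2 \<le> ln (c + s)"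
      proof -
        have "ln (c + u) / 2 \<le> ln (c + sqrt u)" by (rule ln_sqrt_half[OF c u])
        also have "\<dots> \<le> ln (c + s)" using False c u real_sqrt_ge_zero[of u] by (intro ln_mono) linarith+
        finally show ?thesis .
      qed
      have lu: "ln (c + u) > 0" using c u by auto
      have "ln (c + s) powr \<beta> \<le> (ln (c + u) / 2) powr \<beta>" using half lu b by (intro powr_mono2') auto
      also have "\<dots> = 2 powr (-\<beta>) * ln (c + u) powr \<beta>"
        unfolding powr_divide powr_minus_divide by simp
      finally have "ln (c + s) powr \<beta> \<le> 2 powr (-\<beta>) * ln (c + u) powr \<beta>" .
      moreover have "s powr (p - 1) \<le> u powr (p - 1)" using s p by (intro powr_mono2) auto
      ultimately have "s powr (p - 1) * ln (c + s) powr \<beta> \<le> u powr (p - 1) * (2 powr (-\<beta>) * ln (c + u) powr \<beta>)"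
        by (metis mult_mono powr_ge_zero)
      then have "s powr (p - 1) * ln (c + s) powr \<beta> \<le> 2 powr (-\<beta>) * (u powr (p - 1) * ln (c + u) powr \<beta>)"
        by (simp add: ac_simps)
      moreover have "0 \<le> ln c powr \<beta> * u powr ((p - 1) / 2)" by simp
      ultimately show ?thesis unfolding B_def \<beta>_def[symmetric] by linarith
    qed
  qed
  also have "B * u = ln c powr \<beta> * (u powr ((p - 1) / 2) * u) + 2 powr (-\<beta>) * ((u powr (p - 1) * u) * ln (c + u) powr \<beta>)"
    unfolding B_def by (simp add: algebra_simps)
  also have "u powr ((p - 1) / 2) * u = u powr ((p + 1) / 2)"
  proof (cases "u = 0")
    case False
    have "u powr ((p - 1) / 2) * u powr 1 = u powr ((p + 1) / 2)" by (subst powr_add[symmetric]) (simp add: field_simps)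
    moreover have "u powr 1 = u" using False u by simp
    ultimately show ?thesis by simp
  qed simp
  also have "u powr (p - 1) * u = u powr p" by (rule powr_times_self[OF u p])
  finally show ?thesis unfolding \<beta>_def by (simp add: algebra_simps)
qed




lemma G_low:
  fixes q eta u :: real
  assumes q: "q > 0" "q \<le> 2" and eta: "eta > 0" and u: "0 \<le> u"
  shows "u powr q \<le> eta powr q + eta powr (q - 2) * u^2"
proof (cases "u \<le> eta")
  case True
  have "u powr q \<le> eta powr q" using True u q by (intro powr_mono2) auto
  moreover have "0 \<le> eta powr (q - 2) * u^2" by simp
  ultimately show ?thesis by linarith
next
  case False
  then have up: "u > 0" using eta by simp
  have "u powr (q - 2) \<le> eta powr (q - 2)" using q False eta by (intro powr_mono2') auto
  then have "u powr (q - 2) * u^2 \<le> eta powr (q - 2) * u^2" by (intro mult_right_mono) auto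
  then show ?thesis using split_pow2[OF up, of q] by (smt (verit) powr_ge_zero)
qed

lemma u2_pos:
  fixes u M p c \<beta> :: real
  assumes p: "p \<ge> 2" and c: "c > 1" and b: "\<beta> \<ge> 0" and u: "0 \<le> u" "u \<le> M"
  shows "u powr p * ln (c + u) powr \<beta> \<le> (M powr (p - 2) * ln (c + M) powr \<beta>) * u^2"
proof (cases "u = 0")
  case True then show ?thesis by simp
next
  case False
  then have up: "u > 0" using u by simp
  have "u powr (p - 2) \<le> M powr (p - 2)" using p u by (intro powr_mono2) auto
  moreover have "ln (c + u) powr \<beta> \<le> ln (c + M) powr \<beta>" using b c u by (intro powr_mono2) auto
  ultimately have "u powr (p - 2) * ln (c + u) powr \<beta> \<le> M powr (p - 2) * ln (c + M) powr \<beta>"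
    by (intro mult_mono) auto
  then have "(u powr (p - 2) * ln (c + u) powr \<beta>) * u^2 \<le> (M powr (p - 2) * ln (c + M) powr \<beta>) * u^2"
    by (intro mult_right_mono) auto
  then show ?thesis using split_pow2[OF up, of p] by (simp add: ac_simps)
qed

lemma u2_neg:
  fixes u M p c \<beta> :: real
  assumes p: "p \<ge> 2" and c: "c > 1" and b: "\<beta> < 0" and u: "0 \<le> u" "u \<le> M"
  shows "u powr p * ln (c + u) powr \<beta> \<le>
     (ln c powr \<beta> * M powr ((p - 2) / 2) + 2 powr (-\<beta>) * (M powr (p - 2) * ln (c + M) powr \<beta>)) * u^2"
proof (cases "u = 0")
  case True then show ?thesis by simp
next
  case False
  then have up: "u > 0" using u by simp
  have M: "M \<ge> 0" using u by simp
  have key: "u powr (p - 2) * ln (c + u) powr \<beta> \<le>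
     ln c powr \<beta> * M powr ((p - 2) / 2) + 2 powr (-\<beta>) * (M powr (p - 2) * ln (c + M) powr \<beta>)"
  proof (cases "u \<le> sqrt M")
    case True
    have "ln (c + u) powr \<beta> \<le> ln c powr \<beta>" using c u b by (intro powr_mono2') auto
    moreover have "u powr (p - 2) \<le> (sqrt M) powr (p - 2)" using True u p by (intro powr_mono2) auto
    moreover have "(sqrt M) powr (p - 2) = M powr ((p - 2) / 2)"
      using M by (simp add: powr_half_sqrt[symmetric] powr_powr)
    ultimately have "u powr (p - 2) * ln (c + u) powr \<beta> \<le> M powr ((p - 2) / 2) * ln c powr \<beta>"
      by (metis mult_mono powr_ge_zero)
    then have "u powr (p - 2) * ln (c + u) powr \<beta> \<le> ln c powr \<beta> * M powr ((p - 2) / 2)"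
      by (simp add: mult.commute)
    moreover have "0 \<le> 2 powr (-\<beta>) * (M powr (p - 2) * ln (c + M) powr \<beta>)" by simp
    ultimately show ?thesis by linarith
  next
    case False
    have half: "ln (c + M) / 2 \<le> ln (c + u)"
    proof -
      have "ln (c + M) / 2 \<le> ln (c + sqrt M)" by (rule ln_sqrt_half[OF c M])
      also have "\<dots> \<le> ln (c + u)" using False c M real_sqrt_ge_zero[of M] by (intro ln_mono) linarith+
      finally show ?thesis .
    qed
    have lu: "ln (c + M) > 0" using c M by auto
    have "ln (c + u) powr \<beta> \<le> (ln (c + M) / 2) powr \<beta>" using half lu b by (intro powr_mono2') auto
    also have "\<dots> = 2 powr (-\<beta>) * ln (c + M) powr \<beta>"
      unfolding powr_divide powr_minus_divide by simp
    finally have "ln (c + u) powr \<beta> \<le> 2 powr (-\<beta>) * ln (c + M) powr \<beta>" .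
    moreover have "u powr (p - 2) \<le> M powr (p - 2)" using u p by (intro powr_mono2) auto
    ultimately have "u powr (p - 2) * ln (c + u) powr \<beta> \<le> M powr (p - 2) * (2 powr (-\<beta>) * ln (c + M) powr \<beta>)"
      by (metis mult_mono powr_ge_zero)
    then have "u powr (p - 2) * ln (c + u) powr \<beta> \<le> 2 powr (-\<beta>) * (M powr (p - 2) * ln (c + M) powr \<beta>)"
      by (simp add: ac_simps)
    moreover have "0 \<le> ln c powr \<beta> * M powr ((p - 2) / 2)" by simp
    ultimately show ?thesis by linarith
  qed
  then have "(u powr (p - 2) * ln (c + u) powr \<beta>) * u^2 \<le>
     (ln c powr \<beta> * M powr ((p - 2) / 2) + 2 powr (-\<beta>) * (M powr (p - 2) * ln (c + M) powr \<beta>)) * u^2"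
    by (intro mult_right_mono) auto
  then show ?thesis using split_pow2[OF up, of p] by (simp add: ac_simps)
qed

lemma H_M:
  fixes x l t :: real assumes "x > 0" "l > 0"
  shows "(x / l) powr t * x / l^2 = x powr (t + 1) / l powr (t + 2)"
proof -
  have "(x / l) powr t * x / l^2 = (x powr t * x powr 1) / (l powr t * l powr 2)"
    using assms by (simp add: powr_divide powr_numeral)
  also have "\<dots> = x powr (t + 1) / l powr (t + 2)" by (simp add: powr_add)
  finally show ?thesis .
qed

lemma H_lampow:
  fixes x K R l s r p \<alpha> :: real
  assumes x: "x > 0" and K: "K > 0" and l: "l > 0" and r: "r \<ge> 0"
    and R: "R \<ge> x powr (1 - 1/p) * l powr \<alpha>"
  shows "x powr s / (K * R) powr r \<le> x powr (s - r * (1 - 1/p)) * l powr (-(\<alpha> * r)) / K powr r"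
proof -
  have pos: "0 < x powr (1 - 1/p) * l powr \<alpha>" using x l by simp
  have "(x powr (1 - 1/p) * l powr \<alpha>) powr r \<le> R powr r" using R pos r by (intro powr_mono2) auto
  then have "K powr r * (x powr (1 - 1/p) * l powr \<alpha>) powr r \<le> (K * R) powr r"
    using K pos R by (simp add: powr_mult)
  moreover have "(x powr (1 - 1/p) * l powr \<alpha>) powr r = x powr (r * (1 - 1/p)) * l powr (\<alpha> * r)"
    using x l by (simp add: powr_mult powr_powr ac_simps)
  ultimately have den: "K powr r * (x powr (r * (1 - 1/p)) * l powr (\<alpha> * r)) \<le> (K * R) powr r" by simp
  have dpos: "0 < K powr r * (x powr (r * (1 - 1/p)) * l powr (\<alpha> * r))" using K x l by simp
  have "x powr s / (K * R) powr r \<le> x powr s / (K powr r * (x powr (r * (1 - 1/p)) * l powr (\<alpha> * r)))"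
  proof (rule divide_left_mono[OF den])
    have "(K * R) powr r > 0" using K R pos by simp
    then show "0 < (K * R) powr r * (K powr r * (x powr (r * (1 - 1/p)) * l powr (\<alpha> * r)))"
      using dpos by simp
  qed simp
  also have "\<dots> = x powr (s - r * (1 - 1/p)) * l powr (-(\<alpha> * r)) / K powr r"
    using x l K by (simp add: powr_diff powr_minus field_simps powr_add[symmetric])
  finally show ?thesis .
qed

lemma log_bound_pos:
  fixes c \<beta> \<delta> :: real assumes c: "c > 1" and b: "\<beta> \<ge> 0" and d: "\<delta> > 0"
  shows "\<exists>S\<ge>1. \<forall>u\<ge>0. ln (c + u) powr \<beta> \<le> S * (1 + u powr \<delta>)"
proof -
  have "((\<lambda>x::real. ln (c + x) powr \<beta> / x powr \<delta>) \<longlongrightarrow> 0) at_top"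
    using c d by real_asymp
  then have "eventually (\<lambda>x. ln (c + x) powr \<beta> / x powr \<delta> < 1) at_top"
    by (rule order_tendstoD) simp
  then obtain U where U: "\<And>x. x \<ge> U \<Longrightarrow> ln (c + x) powr \<beta> / x powr \<delta> < 1"
    by (auto simp: eventually_at_top_linorder)
  define S where "S = 1 + ln (c + max 1 U) powr \<beta>"
  have S1: "S \<ge> 1" unfolding S_def by simp
  have "ln (c + u) powr \<beta> \<le> S * (1 + u powr \<delta>)" if u: "u \<ge> 0" for u
  proof (cases "u \<ge> max 1 U")
    case True
    then have "ln (c + u) powr \<beta> / u powr \<delta> < 1" using U[of u] by simp
    moreover have "u powr \<delta> > 0" using True by simp
    ultimately have "ln (c + u) powr \<beta> \<le> u powr \<delta>" by (simp add: divide_less_eq)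
    also have "\<dots> \<le> S * (1 + u powr \<delta>)" using S1 by (smt (verit) powr_ge_zero mult_le_cancel_right1 mult.commute)
    finally show ?thesis .
  next
    case False
    have "ln (c + u) powr \<beta> \<le> ln (c + max 1 U) powr \<beta>" using False c u b by (intro powr_mono2) auto
    also have "\<dots> \<le> S" unfolding S_def by simp
    also have "\<dots> \<le> S * (1 + u powr \<delta>)" using S1 by (smt (verit) powr_ge_zero mult_le_cancel_left1)
    finally show ?thesis .
  qed
  then show ?thesis using S1 by blast
qed



definition Rf :: "real \<Rightarrow> real \<Rightarrow> real \<Rightarrow> real" where
  "Rf p \<alpha> x = max (sqrt x) (x powr (1 - 1/p) * ln (exp 1 + x) powr \<alpha>)"

lemma Rf_facts:
  assumes "x \<ge> 1"
  shows "Rf p \<alpha> x \<ge> sqrt x" "Rf p \<alpha> x \<ge> 1" "Rf p \<alpha> x > 0"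
    "Rf p \<alpha> x \<ge> x powr (1 - 1/p) * ln (exp 1 + x) powr \<alpha>"
proof -
  have s: "sqrt x \<ge> 1" using assms by simp
  show "Rf p \<alpha> x \<ge> sqrt x" "Rf p \<alpha> x \<ge> 1" "Rf p \<alpha> x > 0"
    "Rf p \<alpha> x \<ge> x powr (1 - 1/p) * ln (exp 1 + x) powr \<alpha>"
    using s unfolding Rf_def by linarith+
qed

lemma lam_sq:
  assumes K: "K \<ge> 1" and x: "x \<ge> 1"
  shows "2*pi*x / (K * Rf p \<alpha> x)^2 \<le> 2*pi / K"
proof -
  have R: "Rf p \<alpha> x \<ge> sqrt x" using Rf_facts[OF x] by simp
  have "K * x \<le> K^2 * x" using K x by (simp add: power2_eq_square)
  also have "\<dots> = (K * sqrt x)^2" using x by (simp add: power_mult_distrib)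
  also have "\<dots> \<le> (K * Rf p \<alpha> x)^2" using R K x by (intro power_mono mult_left_mono) auto
  finally have d: "K * x \<le> (K * Rf p \<alpha> x)^2" .
  have "2*pi*x / (K * Rf p \<alpha> x)^2 \<le> 2*pi*x / (K * x)"
  proof (rule divide_left_mono[OF d])
    have "0 < K * x" using K x by simp
    moreover then have "0 < (K * Rf p \<alpha> x)^2" using d by linarith
    ultimately show "0 < (K * Rf p \<alpha> x)^2 * (K * x)" by simp
  qed (use x in simp)
  also have "\<dots> = 2*pi / K" using x by simp
  finally show ?thesis .
qed

lemma core:
  fixes \<Phi> :: "real \<Rightarrow> real" and f :: "real \<Rightarrow> complex"
  assumes K: "K \<ge> 1" and x: "x \<ge> 1" and fb: "\<forall>y. norm (f y) \<le> x"
    and I: "((\<lambda>y. (norm (f y))^2) has_integral I) {-pi..pi}" and Ile: "I \<le> 2*pi*x"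
    and bnd: "\<And>u. 0 \<le> u \<Longrightarrow> u \<le> x / (K * Rf p \<alpha> x) \<Longrightarrow> \<Phi> u \<le> a + b * u^2"
    and a: "a \<ge> 0" and b: "b \<ge> 0"
    and tot: "2*pi*a + b * (2*pi*x) / (K * Rf p \<alpha> x)^2 \<le> 1"
  shows "luxemburg_norm \<Phi> f \<le> K * Rf p \<alpha> x"
proof (rule lux_le[OF _ bnd a b _ I])
  have R: "Rf p \<alpha> x > 0" using Rf_facts[OF x] by simp
  show lp: "K * Rf p \<alpha> x > 0" using K R by simp
  show "norm (f y) / (K * Rf p \<alpha> x) \<le> x / (K * Rf p \<alpha> x)" for y
    using fb lp by (intro divide_right_mono) auto
  have "b * I \<le> b * (2*pi*x)" using Ile b by (intro mult_left_mono) auto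
  then have "b * I / (K * Rf p \<alpha> x)^2 \<le> b * (2*pi*x) / (K * Rf p \<alpha> x)^2"
    by (intro divide_right_mono) auto
  then show "2*pi*a + b * I / (K * Rf p \<alpha> x)^2 \<le> 1" using tot by linarith
qed auto

definition good :: "real \<Rightarrow> real \<Rightarrow> real \<Rightarrow> real \<Rightarrow> bool" where
  "good p \<alpha> c K \<longleftrightarrow> (\<forall>x (f::real \<Rightarrow> complex) I. x \<ge> 1 \<longrightarrow> (\<forall>y. norm (f y) \<le> x) \<longrightarrow>
      ((\<lambda>y. (norm (f y))^2) has_integral I) {-pi..pi} \<longrightarrow> I \<le> 2*pi*x \<longrightarrow>
      luxemburg_norm (LlogL_Phi p \<alpha> c) f \<le> K * Rf p \<alpha> x)"

lemma case1:
  assumes p: "p > 1" "p \<le> 2" and c: "c > 1" and a: "\<alpha> < 0"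
  shows "\<exists>K\<ge>1. good p \<alpha> c K"
proof -
  define S where "S = ln c powr (\<alpha> * p)"
  have S: "S > 0" unfolding S_def using c by simp
  define eta where "eta = (1 / (4*pi*S)) powr (1/p)"
  have eta: "eta > 0" unfolding eta_def using S by simp
  have etap: "eta powr p = 1 / (4*pi*S)" unfolding eta_def using S p by (simp add: powr_powr)
  define b where "b = S * eta powr (p - 2)"
  have b: "b \<ge> 0" unfolding b_def using S by simp
  define K where "K = max 1 (4*pi*b)"
  have K: "K \<ge> 1" "K \<ge> 4*pi*b" unfolding K_def by auto
  have "good p \<alpha> c K" unfolding good_def
  proof (intro allI impI)
    fix x and f :: "real \<Rightarrow> complex" and I
    assume x: "x \<ge> 1" and fb: "\<forall>y. norm (f y) \<le> x"
      and I: "((\<lambda>y. (norm (f y))^2) has_integral I) {-pi..pi}" and Ile: "I \<le> 2*pi*x"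
    show "luxemburg_norm (LlogL_Phi p \<alpha> c) f \<le> K * Rf p \<alpha> x"
    proof (rule core[OF K(1) x fb I Ile, where a = "S * eta powr p" and b = b])
      fix u :: real assume u: "0 \<le> u"
      have "LlogL_Phi p \<alpha> c u \<le> S * u powr p" unfolding S_def by (rule PhiB[OF p(1) c a u])
      also have "\<dots> \<le> S * (eta powr p + eta powr (p - 2) * u^2)"
        using G_low[of p eta u] p eta u S by (intro mult_left_mono) auto
      also have "\<dots> = S * eta powr p + b * u^2" unfolding b_def by (simp add: algebra_simps)
      finally show "LlogL_Phi p \<alpha> c u \<le> S * eta powr p + b * u^2" .
    next
      show "0 \<le> S * eta powr p" using S by simp
    next
      show "0 \<le> b" by (rule b)
    next
      have "b * (2*pi*x) / (K * Rf p \<alpha> x)^2 = b * (2*pi*x / (K * Rf p \<alpha> x)^2)" by simp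
      also have "\<dots> \<le> b * (2*pi / K)" using lam_sq[OF K(1) x] b by (intro mult_left_mono) auto
      also have "\<dots> \<le> 1/2" using K b by (simp add: field_simps)
      finally have t2: "b * (2*pi*x) / (K * Rf p \<alpha> x)^2 \<le> 1/2" .
      have "2*pi*(S * eta powr p) = 1/2" using etap S by simp
      then show "2*pi*(S * eta powr p) + b * (2*pi*x) / (K * Rf p \<alpha> x)^2 \<le> 1" using t2 by linarith
    qed
  qed
  then show ?thesis using K by blast
qed



lemma case2:
  assumes p: "p > 1" "p < 2" and c: "c > 1" and a: "\<alpha> \<ge> 0"
  shows "\<exists>K\<ge>1. good p \<alpha> c K"
proof -
  define q where "q = (p + 2) / 2"
  have q: "q > 0" "q \<le> 2" "p \<le> q" unfolding q_def using p by auto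
  have bnn: "\<alpha> * p \<ge> 0" using a p by simp
  obtain S where S: "S \<ge> 1" and Sb: "\<And>u. u \<ge> 0 \<Longrightarrow> ln (c + u) powr (\<alpha> * p) \<le> S * (1 + u powr ((2 - p) / 2))"
    using log_bound_pos[OF c bnn, of "(2 - p) / 2"] p by auto
  define eta where "eta = (1 / (8*pi*S)) powr (1/p)"
  have eta: "eta > 0" unfolding eta_def using S by simp
  have etap: "eta powr p = 1 / (8*pi*S)" unfolding eta_def using S p by (simp add: powr_powr)
  have "1 \<le> 8*pi*S" using S pi_gt3 by (smt (verit) mult_le_cancel_left1 mult_nonneg_nonneg)
  then have eta1: "eta \<le> 1" unfolding eta_def using S p by (intro powr_le1) auto
  have etaq: "eta powr q \<le> eta powr p" using q eta eta1 by (intro powr_mono') auto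
  define b where "b = S * eta powr (p - 2) + S * eta powr (q - 2)"
  have b: "b \<ge> 0" unfolding b_def using S by simp
  define K where "K = max 1 (4*pi*b)"
  have K: "K \<ge> 1" "K \<ge> 4*pi*b" unfolding K_def by auto
  have "good p \<alpha> c K" unfolding good_def
  proof (intro allI impI)
    fix x and f :: "real \<Rightarrow> complex" and I
    assume x: "x \<ge> 1" and fb: "\<forall>y. norm (f y) \<le> x"
      and I: "((\<lambda>y. (norm (f y))^2) has_integral I) {-pi..pi}" and Ile: "I \<le> 2*pi*x"
    show "luxemburg_norm (LlogL_Phi p \<alpha> c) f \<le> K * Rf p \<alpha> x"
    proof (rule core[OF K(1) x fb I Ile, where a = "S * eta powr p + S * eta powr q" and b = b])
      fix u :: real assume u: "0 \<le> u"
      have "LlogL_Phi p \<alpha> c u \<le> u powr p * ln (c + u) powr (\<alpha> * p)" by (rule PhiA[OF p(1) c a u])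
      also have "\<dots> \<le> u powr p * (S * (1 + u powr ((2 - p) / 2)))"
        using Sb[OF u] by (intro mult_left_mono) auto
      also have "\<dots> = S * u powr p + S * u powr q"
      proof (cases "u = 0")
        case False
        then have "u powr p * u powr ((2 - p) / 2) = u powr q" using u unfolding q_def
          by (subst powr_add[symmetric]) (simp add: field_simps)
        then show ?thesis by (simp add: algebra_simps)
      qed simp
      also have "\<dots> \<le> S * (eta powr p + eta powr (p - 2) * u^2) + S * (eta powr q + eta powr (q - 2) * u^2)"
        using G_low[of p eta u] G_low[of q eta u] p q eta u S
        by (intro add_mono mult_left_mono) auto
      also have "\<dots> = (S * eta powr p + S * eta powr q) + b * u^2" unfolding b_def by (simp add: algebra_simps)
      finally show "LlogL_Phi p \<alpha> c u \<le> (S * eta powr p + S * eta powr q) + b * u^2" .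
    next
      show "0 \<le> S * eta powr p + S * eta powr q" using S by simp
    next
      show "0 \<le> b" by (rule b)
    next
      have "b * (2*pi*x) / (K * Rf p \<alpha> x)^2 = b * (2*pi*x / (K * Rf p \<alpha> x)^2)" by simp
      also have "\<dots> \<le> b * (2*pi / K)" using lam_sq[OF K(1) x] b by (intro mult_left_mono) auto
      also have "\<dots> \<le> 1/2" using K b by (simp add: field_simps)
      finally have t2: "b * (2*pi*x) / (K * Rf p \<alpha> x)^2 \<le> 1/2" .
      have "S * eta powr q \<le> S * eta powr p" using etaq S by (intro mult_left_mono) auto
      moreover have "2*pi*(S * eta powr p) = 1/4" using etap S by simp
      ultimately have "2*pi*(S * eta powr q) \<le> 1/4" using pi_gt_zero
        by (metis mult_left_mono less_eq_real_def mult_pos_pos zero_less_numeral)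
      then have "2*pi*(S * eta powr p + S * eta powr q) \<le> 1/2" using \<open>2*pi*(S * eta powr p) = 1/4\<close>
        by (simp add: distrib_left)
      then show "2*pi*(S * eta powr p + S * eta powr q) + b * (2*pi*x) / (K * Rf p \<alpha> x)^2 \<le> 1" using t2 by linarith
    qed
  qed
  then show ?thesis using K by blast
qed



lemma ln_ell_ge1: "x \<ge> 0 \<Longrightarrow> ln (exp 1 + x) \<ge> (1::real)"
proof -
  assume x: "x \<ge> 0"
  have "ln (exp 1) \<le> ln (exp 1 + x)" using x by (intro ln_mono) auto
  then show ?thesis by simp
qed

lemma K_powr_ge: "K \<ge> 1 \<Longrightarrow> r \<ge> 1 \<Longrightarrow> K \<le> K powr (r::real)"
  using powr_mono[of 1 r K] by simp

lemma case3:
  assumes p: "p \<ge> 2" and c: "c > 1" and a: "\<alpha> \<ge> 0"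
  shows "\<exists>K\<ge>1. good p \<alpha> c K"
proof -
  define \<beta> where "\<beta> = \<alpha> * p"
  have bnn: "\<beta> \<ge> 0" unfolding \<beta>_def using a p by simp
  define D where "D = 2*pi*(1 + ln c) powr \<beta>"
  have D: "D \<ge> 0" unfolding D_def by simp
  define K where "K = max 1 D"
  have K: "K \<ge> 1" "K \<ge> D" unfolding K_def by auto
  have "good p \<alpha> c K" unfolding good_def
  proof (intro allI impI)
    fix x and f :: "real \<Rightarrow> complex" and I
    assume x: "x \<ge> 1" and fb: "\<forall>y. norm (f y) \<le> x"
      and I: "((\<lambda>y. (norm (f y))^2) has_integral I) {-pi..pi}" and Ile: "I \<le> 2*pi*x"
    define lam where "lam = K * Rf p \<alpha> x"
    have R: "Rf p \<alpha> x \<ge> 1" "Rf p \<alpha> x > 0" using Rf_facts[OF x] by auto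
    have lam1: "lam \<ge> 1" unfolding lam_def using R K mult_mono[of 1 K 1 "Rf p \<alpha> x"] by simp
    define M where "M = x / lam"
    have M: "M > 0" "M \<le> x" unfolding M_def using x lam1 by (auto simp: divide_le_eq)
    define l where "l = ln (exp 1 + x)"
    have l1: "l \<ge> 1" unfolding l_def using ln_ell_ge1 x by simp
    define b where "b = M powr (p - 2) * ln (c + M) powr \<beta>"
    have b: "b \<ge> 0" unfolding b_def by simp
    show "luxemburg_norm (LlogL_Phi p \<alpha> c) f \<le> K * Rf p \<alpha> x"
    proof (rule core[OF K(1) x fb I Ile, where a = 0 and b = b])
      fix u :: real assume u: "0 \<le> u" "u \<le> x / (K * Rf p \<alpha> x)"
      have "LlogL_Phi p \<alpha> c u \<le> u powr p * ln (c + u) powr \<beta>" unfolding \<beta>_def using p by (intro PhiA[OF _ c a u(1)]) auto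
      also have "\<dots> \<le> b * u^2" unfolding b_def
        by (rule u2_pos[OF p c bnn u(1)]) (use u in \<open>simp add: M_def lam_def\<close>)
      finally show "LlogL_Phi p \<alpha> c u \<le> 0 + b * u^2" by simp
    next
      show "0 \<le> b" by (rule b)
    next
      have e1: "b * (2*pi*x) / (K * Rf p \<alpha> x)^2 = 2*pi * ((M powr (p - 2) * x / lam^2) * ln (c + M) powr \<beta>)"
        unfolding b_def lam_def by (simp add: algebra_simps)
      have "M powr (p - 2) * x / lam^2 = x powr (p - 1) / lam powr p"
        unfolding M_def using H_M[of x lam "p - 2"] x lam1 by simp
      also have "\<dots> \<le> x powr ((p - 1) - p * (1 - 1/p)) * l powr (-(\<alpha> * p)) / K powr p"
        unfolding lam_def using x K R p l1 Rf_facts(4)[OF x]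
        by (intro H_lampow) (auto simp: l_def)
      also have "x powr ((p - 1) - p * (1 - 1/p)) = 1"
      proof -
        have "(p - 1) - p * (1 - 1/p) = 0" using p by (simp add: field_simps)
        then show ?thesis using x by simp
      qed
      finally have e2: "M powr (p - 2) * x / lam^2 \<le> l powr (-(\<alpha> * p)) / K powr p" by simp
      have "ln (c + M) powr \<beta> \<le> ((1 + ln c) * l) powr \<beta>"
      proof -
        have "ln (c + M) \<le> ln (c + x)" using M c by (intro ln_mono) auto
        also have "\<dots> \<le> ln (c * (exp 1 + x))"
        proof (rule ln_mono)
          have "x \<le> c * x" using c x by simp
          moreover have "c \<le> c * exp 1" using c by simp
          ultimately show "c + x \<le> c * (exp 1 + x)" by (simp add: distrib_left)
        qed (use c x in auto)
        also have "\<dots> = ln c + l" unfolding l_def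
        proof -
          have "exp 1 + x > 0" using x exp_gt_zero[of "1::real"] by linarith
          then show "ln (c * (exp 1 + x)) = ln c + ln (exp 1 + x)" using c by (simp add: ln_mult)
        qed
        also have "\<dots> \<le> (1 + ln c) * l" using l1 c by (simp add: distrib_right)
        finally show ?thesis using bnn c M by (intro powr_mono2) auto
      qed
      also have "((1 + ln c) * l) powr \<beta> = (1 + ln c) powr \<beta> * l powr \<beta>"
        using c l1 by (simp add: powr_mult)
      finally have e3: "ln (c + M) powr \<beta> \<le> (1 + ln c) powr \<beta> * l powr \<beta>" .
      have "(M powr (p - 2) * x / lam^2) * ln (c + M) powr \<beta> \<le> (l powr (-(\<alpha> * p)) / K powr p) * ((1 + ln c) powr \<beta> * l powr \<beta>)"
        using e2 e3 by (intro mult_mono) auto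
      then have "b * (2*pi*x) / (K * Rf p \<alpha> x)^2 \<le> 2*pi * ((l powr (-(\<alpha> * p)) / K powr p) * ((1 + ln c) powr \<beta> * l powr \<beta>))"
        unfolding e1 by (intro mult_left_mono) auto
      also have "\<dots> = D / K powr p" unfolding D_def \<beta>_def using l1 by (simp add: powr_minus field_simps)
      also have "\<dots> \<le> D / K" using K_powr_ge[OF K(1), of p] K p D by (intro divide_left_mono) auto
      also have "\<dots> \<le> 1" using K by simp
      finally show "2*pi*0 + b * (2*pi*x) / (K * Rf p \<alpha> x)^2 \<le> 1" by simp
    qed simp

  qed
  then show ?thesis using K by blast
qed



lemma R_upper:
  fixes p \<alpha> x :: real
  assumes p: "p \<ge> 2" and a: "\<alpha> \<le> 0" and x: "x \<ge> 1"
  shows "Rf p \<alpha> x \<le> x powr (1 - 1/p)"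
proof -
  have "sqrt x = x powr (1/2)" using x by (simp add: powr_half_sqrt)
  also have "\<dots> \<le> x powr (1 - 1/p)" using x p by (intro powr_mono) (auto simp: field_simps)
  finally have s: "sqrt x \<le> x powr (1 - 1/p)" .
  have "ln (exp 1 + x) powr \<alpha> \<le> ln (exp 1 + x) powr 0"
    using ln_ell_ge1[of x] x a by (intro powr_mono) auto
  then have "ln (exp 1 + x) powr \<alpha> \<le> 1" using ln_ell_ge1[of x] x by simp
  then have "x powr (1 - 1/p) * ln (exp 1 + x) powr \<alpha> \<le> x powr (1 - 1/p) * 1"
    by (intro mult_left_mono) auto
  then show ?thesis using s unfolding Rf_def by simp
qed

lemma log_chain:
  fixes p c K x M :: real
  assumes p: "p \<ge> 2" and c: "c > 1" and K: "K \<ge> 1" and x: "x \<ge> 1"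
    and M: "M \<ge> x powr (1/p) / K"
  shows "ln (exp 1 + x) \<le> p * (1 + ln (K * exp 1) / ln c) * ln (c + M)"
proof -
  define t where "t = x powr (1/p)"
  have t1: "t \<ge> 1" unfolding t_def using x p by (simp add: ge_one_powr_ge_zero)
  have xt: "x = t powr p" unfolding t_def using x p by (simp add: powr_powr)
  have e0: "exp 1 > (1::real)" by simp
  have et: "exp 1 + t > 0" using t1 e0 by linarith
  have "(exp 1 + t) powr (p - 1) \<ge> 1" using et t1 e0 p by (intro ge_one_powr_ge_zero) linarith+
  moreover have "(exp 1 + t) powr (p - 1) \<ge> t powr (p - 1)" using t1 e0 p by (intro powr_mono2) linarith+
  ultimately have "exp 1 + t powr (p - 1) * t \<le> (exp 1 + t) powr (p - 1) * exp 1 + (exp 1 + t) powr (p - 1) * t"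
    using t1 e0 by (intro add_mono mult_right_mono) auto
  also have "\<dots> = (exp 1 + t) powr (p - 1) * (exp 1 + t)" by (simp add: distrib_left)
  also have "\<dots> = (exp 1 + t) powr p" using powr_times_self[of "exp 1 + t" p] et p by simp
  finally have "exp 1 + x \<le> (exp 1 + t) powr p" unfolding xt using powr_times_self[of t p] t1 p by simp
  then have "ln (exp 1 + x) \<le> ln ((exp 1 + t) powr p)" using x e0 by (intro ln_mono) linarith+
  also have "\<dots> = p * ln (exp 1 + t)" using et by (simp add: ln_powr)
  finally have i: "ln (exp 1 + x) \<le> p * ln (exp 1 + t)" .
  have Kp: "K > 0" using K by simp
  have ct: "c + t / K > 0" using c t1 Kp by (smt (verit) divide_nonneg_pos)
  have "exp 1 + t \<le> (K * exp 1) * (c + t / K)"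
  proof -
    have "(K * exp 1) * (c + t / K) = K * exp 1 * c + exp 1 * t" using Kp by (simp add: field_simps)
    moreover have "exp 1 \<le> K * exp 1 * c" using K c e0
      by (smt (verit) mult_le_cancel_right1 mult_le_cancel_left1 mult_pos_pos)
    moreover have "t \<le> exp 1 * t" using t1 e0 by simp
    ultimately show ?thesis by linarith
  qed
  then have "ln (exp 1 + t) \<le> ln ((K * exp 1) * (c + t / K))" using et by (intro ln_mono) auto
  also have "\<dots> = ln (K * exp 1) + ln (c + t / K)" using Kp ct by (simp add: ln_mult)
  finally have ii: "ln (exp 1 + t) \<le> ln (K * exp 1) + ln (c + t / K)" .
  have lc: "ln c > 0" using c by simp
  have lK: "ln (K * exp 1) \<ge> 0" using K e0 by (simp add: ln_mult)
  have lct: "ln c \<le> ln (c + t / K)" using c t1 Kp by (intro ln_mono) auto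
  have "ln (K * exp 1) = (ln (K * exp 1) / ln c) * ln c" using lc by simp
  also have "\<dots> \<le> (ln (K * exp 1) / ln c) * ln (c + t / K)" using lct lK lc by (intro mult_left_mono) auto
  finally have "ln (exp 1 + t) \<le> (1 + ln (K * exp 1) / ln c) * ln (c + t / K)"
    using ii by (simp add: distrib_right)
  also have "\<dots> \<le> (1 + ln (K * exp 1) / ln c) * ln (c + M)"
    using M lK lc ct unfolding t_def[symmetric] by (intro mult_left_mono ln_mono) auto
  finally have "p * ln (exp 1 + t) \<le> p * ((1 + ln (K * exp 1) / ln c) * ln (c + M))"
    using p by (intro mult_left_mono) auto
  then show ?thesis using i by (simp add: mult.assoc)
qed



lemma case4:
  assumes p: "p > 2" and c: "c > 1" and a: "\<alpha> < 0"
  shows "\<exists>K\<ge>1. good p \<alpha> c K"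
proof -
  define \<beta> where "\<beta> = \<alpha> * p"
  have bneg: "\<beta> < 0" unfolding \<beta>_def using a p by (simp add: mult_neg_pos)
  define q where "q = (p + 1) / 2"
  have q: "q > 0" "q < p" unfolding q_def using p by auto
  define S0 where "S0 = ln c powr \<beta>"
  have S0: "S0 > 0" unfolding S0_def using c by simp
  define a1 where "a1 = ((q - 2) + 1) - ((q - 2) + 2) * (1 - 1/p)"
  have a1: "a1 < 0"
  proof -
    have "a1 = q / p - 1" unfolding a1_def using p by (simp add: field_simps)
    moreover have "q / p < 1" using q p by simp
    ultimately show ?thesis by simp
  qed
  define a2 where "a2 = ((p - 2) / 2 + 1) - ((p - 2) / 2 + 2) * (1 - 1/p)"
  have a2: "a2 < 0"
  proof -
    have "a2 = (2 - p) / (2 * p)" unfolding a2_def using p by (simp add: field_simps)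
    moreover have "(2 - p) / (2 * p) < 0" using p by (simp add: divide_neg_pos)
    ultimately show ?thesis by simp
  qed
  obtain T1 where T1: "T1 > 0" "\<And>x. x \<ge> 1 \<Longrightarrow> x powr a1 * ln (exp 1 + x) powr (-(\<alpha> * ((q - 2) + 2))) \<le> T1"
    using bounded_powr_log[OF a1] by blast
  obtain T2 where T2: "T2 > 0" "\<And>x. x \<ge> 1 \<Longrightarrow> x powr a2 * ln (exp 1 + x) powr (-(\<alpha> * ((p - 2) / 2 + 2))) \<le> T2"
    using bounded_powr_log[OF a2] by blast
  define eta where "eta = (1 / (4*pi*S0)) powr (1/q)"
  have eta: "eta > 0" unfolding eta_def using S0 by simp
  have etaq: "eta powr q = 1 / (4*pi*S0)" unfolding eta_def using S0 q by (simp add: powr_powr)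
  define C1 where "C1 = 2*pi * (S0 * eta powr (q - 2) + S0 * T1 + 2 powr (-\<beta>) * (S0 * T2))"
  define C2 where "C2 = 2*pi * (2 powr (-\<beta>) * 2 powr (-\<beta>))"
  define W where "W K = (p * (1 + ln (K * exp 1) / ln c)) powr (-\<beta>) / K powr p" for K
  have "(W \<longlongrightarrow> 0) at_top" unfolding W_def using p c by real_asymp
  then have "eventually (\<lambda>K. C2 * W K < 1/4) at_top"
    by (intro order_tendstoD) (auto intro!: tendsto_eq_intros)
  moreover have "eventually (\<lambda>K. K \<ge> max 1 (4 * C1)) at_top" by (rule eventually_ge_at_top)
  ultimately obtain K where KW: "C2 * W K < 1/4" and Kge: "K \<ge> max 1 (4 * C1)"
    by (metis (mono_tags, lifting) eventually_at_top_linorder eventually_conj order.refl)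
  have K: "K \<ge> 1" using Kge by simp
  have "good p \<alpha> c K" unfolding good_def
  proof (intro allI impI)
    fix x and f :: "real \<Rightarrow> complex" and I
    assume x: "x \<ge> 1" and fb: "\<forall>y. norm (f y) \<le> x"
      and I: "((\<lambda>y. (norm (f y))^2) has_integral I) {-pi..pi}" and Ile: "I \<le> 2*pi*x"
    define lam where "lam = K * Rf p \<alpha> x"
    have R: "Rf p \<alpha> x \<ge> 1" "Rf p \<alpha> x > 0" using Rf_facts[OF x] by auto
    have lam1: "lam \<ge> 1" unfolding lam_def using R K mult_mono[of 1 K 1 "Rf p \<alpha> x"] by simp
    have lam0: "lam > 0" using lam1 by simp
    define M where "M = x / lam"
    have M: "M > 0" unfolding M_def using x lam1 by auto
    define l where "l = ln (exp 1 + x)"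
    have l1: "l \<ge> 1" unfolding l_def using ln_ell_ge1 x by simp
    have Rl: "Rf p \<alpha> x \<ge> x powr (1 - 1/p) * l powr \<alpha>" unfolding l_def by (rule Rf_facts(4)[OF x])
    define b where "b = S0 * (eta powr (q - 2) + M powr (q - 2))
       + 2 powr (-\<beta>) * (S0 * M powr ((p - 2) / 2) + 2 powr (-\<beta>) * (M powr (p - 2) * ln (c + M) powr \<beta>))"
    have b: "b \<ge> 0" unfolding b_def using S0 by simp
    show "luxemburg_norm (LlogL_Phi p \<alpha> c) f \<le> K * Rf p \<alpha> x"
    proof (rule core[OF K x fb I Ile, where a = "S0 * eta powr q" and b = b])
      fix u :: real assume u: "0 \<le> u" "u \<le> x / (K * Rf p \<alpha> x)"
      then have uM: "u \<le> M" unfolding M_def lam_def by simp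
      have "LlogL_Phi p \<alpha> c u \<le> S0 * u powr q + 2 powr (-\<beta>) * (u powr p * ln (c + u) powr \<beta>)"
        unfolding S0_def q_def \<beta>_def using PhiC[OF _ c a u(1)] p by simp
      also have "\<dots> \<le> S0 * (eta powr q + (eta powr (q - 2) + M powr (q - 2)) * u^2)
          + 2 powr (-\<beta>) * ((S0 * M powr ((p - 2) / 2) + 2 powr (-\<beta>) * (M powr (p - 2) * ln (c + M) powr \<beta>)) * u^2)"
      proof -
        have g: "u powr q \<le> eta powr q + (eta powr (q - 2) + M powr (q - 2)) * u^2"
          by (rule G_lemma[OF q(1) eta u(1) uM])
        have h: "u powr p * ln (c + u) powr \<beta> \<le> (S0 * M powr ((p - 2) / 2) + 2 powr (-\<beta>) * (M powr (p - 2) * ln (c + M) powr \<beta>)) * u^2"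
          unfolding S0_def using p by (intro u2_neg[OF _ c bneg u(1) uM]) simp
        show ?thesis using S0 by (intro add_mono mult_left_mono g h) simp_all
      qed
      also have "\<dots> = S0 * eta powr q + b * u^2" unfolding b_def by (simp add: algebra_simps)
      finally show "LlogL_Phi p \<alpha> c u \<le> S0 * eta powr q + b * u^2" .
    next
      show "0 \<le> S0 * eta powr q" using S0 by simp
    next
      show "0 \<le> b" by (rule b)
    next
      define X0 where "X0 = x / lam^2"
      define X1 where "X1 = M powr (q - 2) * x / lam^2"
      define X2 where "X2 = M powr ((p - 2) / 2) * x / lam^2"
      define X3 where "X3 = M powr (p - 2) * x / lam^2"
      have xs: "X1 = M powr (q - 2) * X0" "X2 = M powr ((p - 2) / 2) * X0" "X3 = M powr (p - 2) * X0"
        unfolding X0_def X1_def X2_def X3_def by simp_all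
      have "b * (2*pi*x) / (K * Rf p \<alpha> x)^2 = 2*pi * (b * X0)"
        unfolding X0_def lam_def by simp
      also have "b * X0 = S0 * eta powr (q - 2) * X0 + S0 * X1
          + 2 powr (-\<beta>) * (S0 * X2) + 2 powr (-\<beta>) * 2 powr (-\<beta>) * (X3 * ln (c + M) powr \<beta>)"
        unfolding b_def xs by (simp add: algebra_simps)
      finally have eqb: "b * (2*pi*x) / (K * Rf p \<alpha> x)^2 = 2*pi * (S0 * eta powr (q - 2) * X0 + S0 * X1
          + 2 powr (-\<beta>) * (S0 * X2) + 2 powr (-\<beta>) * 2 powr (-\<beta>) * (X3 * ln (c + M) powr \<beta>))" .
      have X0: "X0 \<le> 1 / K"
      proof -
        have "2*pi*x / lam^2 \<le> 2*pi / K" unfolding lam_def by (rule lam_sq[OF K x])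
        then have "2*pi * X0 \<le> 2*pi * (1/K)" unfolding X0_def by simp
        then show ?thesis by (rule mult_left_le_imp_le) simp
      qed
      have X1: "X1 \<le> T1 / K"
      proof -
        have "X1 = x powr ((q - 2) + 1) / lam powr ((q - 2) + 2)"
          unfolding X1_def M_def by (rule H_M) (use x lam0 in auto)
        also have "\<dots> \<le> x powr a1 * l powr (-(\<alpha> * ((q - 2) + 2))) / K powr ((q - 2) + 2)"
          unfolding lam_def a1_def using x K l1 q Rl by (intro H_lampow) auto
        also have "\<dots> \<le> T1 / K powr ((q - 2) + 2)"
          using T1(2)[OF x] K unfolding l_def by (intro divide_right_mono) auto
        also have "\<dots> \<le> T1 / K"
          using K_powr_ge[OF K, of "(q - 2) + 2"] K T1 q p unfolding q_def by (intro divide_left_mono) auto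
        finally show ?thesis .
      qed
      have X2: "X2 \<le> T2 / K"
      proof -
        have "X2 = x powr ((p - 2) / 2 + 1) / lam powr ((p - 2) / 2 + 2)"
          unfolding X2_def M_def by (rule H_M) (use x lam0 in auto)
        also have "\<dots> \<le> x powr a2 * l powr (-(\<alpha> * ((p - 2) / 2 + 2))) / K powr ((p - 2) / 2 + 2)"
          unfolding lam_def a2_def using x K l1 p Rl by (intro H_lampow) auto
        also have "\<dots> \<le> T2 / K powr ((p - 2) / 2 + 2)"
          using T2(2)[OF x] K unfolding l_def by (intro divide_right_mono) auto
        also have "\<dots> \<le> T2 / K"
          using K_powr_ge[OF K, of "(p - 2) / 2 + 2"] K T2 p by (intro divide_left_mono) auto
        finally show ?thesis .
      qed
      have X3: "X3 * ln (c + M) powr \<beta> \<le> W K"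
      proof -
        have "X3 = x powr ((p - 2) + 1) / lam powr ((p - 2) + 2)"
          unfolding X3_def M_def by (rule H_M) (use x lam0 in auto)
        also have "\<dots> \<le> x powr (((p - 2) + 1) - ((p - 2) + 2) * (1 - 1/p)) * l powr (-(\<alpha> * ((p - 2) + 2))) / K powr ((p - 2) + 2)"
          unfolding lam_def using x K l1 p Rl by (intro H_lampow) auto
        also have "x powr (((p - 2) + 1) - ((p - 2) + 2) * (1 - 1/p)) = 1"
        proof -
          have "((p - 2) + 1) - ((p - 2) + 2) * (1 - 1/p) = 0" using p by (simp add: field_simps)
          then show ?thesis using x by simp
        qed
        finally have X3': "X3 \<le> l powr (-\<beta>) / K powr p" unfolding \<beta>_def by simp
        define P where "P = p * (1 + ln (K * exp 1) / ln c)"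
        have lK: "ln (K * exp 1) \<ge> 0" using K by (simp add: ln_mult)
        have P: "P > 0" unfolding P_def using p c lK by (intro mult_pos_pos add_pos_nonneg) auto
        have Mlow: "M \<ge> x powr (1/p) / K"
        proof -
          have "lam \<le> K * x powr (1 - 1/p)" unfolding lam_def
            using R_upper[of p \<alpha> x] p a x K by (intro mult_left_mono) auto
          then have "x / (K * x powr (1 - 1/p)) \<le> M" unfolding M_def
            using lam0 x by (intro divide_left_mono) auto
          moreover have "x / (K * x powr (1 - 1/p)) = x powr (1/p) / K"
          proof -
            have "x / x powr (1 - 1/p) = x powr 1 / x powr (1 - 1/p)" using x by simp
            also have "\<dots> = x powr (1 - (1 - 1/p))" by (rule powr_diff[symmetric])
            also have "\<dots> = x powr (1/p)" by simp
            finally show ?thesis by (metis divide_divide_eq_left mult.commute)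
          qed
          ultimately show ?thesis by simp
        qed
        have "l \<le> P * ln (c + M)" unfolding l_def P_def
          using log_chain[of p c K x M] p c K x Mlow by simp
        then have lP: "l / P \<le> ln (c + M)" using P by (simp add: divide_le_eq mult.commute)
        have "ln (c + M) powr \<beta> \<le> (l / P) powr \<beta>"
          using lP bneg l1 P by (intro powr_mono2') auto
        also have "\<dots> = l powr \<beta> * P powr (-\<beta>)" unfolding powr_divide powr_minus by (simp add: divide_inverse)
        finally have LM: "ln (c + M) powr \<beta> \<le> l powr \<beta> * P powr (-\<beta>)" .
        have "X3 * ln (c + M) powr \<beta> \<le> (l powr (-\<beta>) / K powr p) * (l powr \<beta> * P powr (-\<beta>))"
          using X3' LM by (intro mult_mono) (auto simp: X3_def M_def)
        also have "\<dots> = (l powr (-\<beta>) * l powr \<beta>) * P powr (-\<beta>) / K powr p" by simp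
        also have "l powr (-\<beta>) * l powr \<beta> = 1" using l1 by (simp add: powr_add[symmetric])
        finally show ?thesis unfolding W_def P_def by simp
      qed
      have "b * (2*pi*x) / (K * Rf p \<alpha> x)^2 \<le> 2*pi * (S0 * eta powr (q - 2) * (1/K) + S0 * (T1/K)
          + 2 powr (-\<beta>) * (S0 * (T2/K)) + 2 powr (-\<beta>) * 2 powr (-\<beta>) * W K)"
        unfolding eqb using X0 X1 X2 X3 S0
        by (intro mult_left_mono add_mono mult_left_mono) auto
      also have "\<dots> = C1 / K + C2 * W K" unfolding C1_def C2_def by (simp add: field_simps add_divide_distrib)
      also have "\<dots> \<le> 1/4 + 1/4"
      proof -
        have "C1 / K \<le> 1/4" using Kge K by (simp add: divide_le_eq)
        then show ?thesis using KW by linarith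
      qed
      finally have t2: "b * (2*pi*x) / (K * Rf p \<alpha> x)^2 \<le> 1/2" by simp
      have "2*pi*(S0 * eta powr q) = 1/2" using etaq S0 by simp
      then show "2*pi*(S0 * eta powr q) + b * (2*pi*x) / (K * Rf p \<alpha> x)^2 \<le> 1" using t2 by linarith
    qed
  qed
  then show ?thesis using K by blast
qed


theorem lemma5p2:
  fixes p \<alpha> c :: real
  assumes "1 < p" and "c > 1" and "young_function (LlogL_Phi p \<alpha> c)"
  shows "\<exists>C>0. \<forall>(N::nat) (A::int set) (\<epsilon>::int \<Rightarrow> complex).
           N \<ge> 1 \<longrightarrow> finite A \<longrightarrow> card A \<le> N \<longrightarrow> (\<forall>n\<in>A. norm (\<epsilon> n) \<le> 1) \<longrightarrow>
           LplogL_norm p \<alpha> c (\<lambda>x. \<Sum>n\<in>A. \<epsilon> n * cis (of_int n * x))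
             \<le> C * max (sqrt (real N)) (real N powr (1 - 1 / p) * (ln (exp 1 + real N)) powr \<alpha>)"
proof -
  have p: "p > 1" and c: "c > 1" using assms by auto
  obtain K where K: "K \<ge> 1" "good p \<alpha> c K"
  proof (cases "\<alpha> < 0")
    case True
    show ?thesis
    proof (cases "p \<le> 2")
      case True
      then show ?thesis using case1[OF p True c \<open>\<alpha> < 0\<close>] that by blast
    next
      case False
      then show ?thesis using case4[of p c \<alpha>] c \<open>\<alpha> < 0\<close> that by force
    qed
  next
    case False
    then have a: "\<alpha> \<ge> 0" by simp
    show ?thesis
    proof (cases "p < 2")
      case True
      then show ?thesis using case2[OF p True c a] that by blast
    next
      case False
      then show ?thesis using case3[of p c \<alpha>] c a that by force
    qed
  qed
  have "\<forall>(N::nat) (A::int set) (\<epsilon>::int \<Rightarrow> complex).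
           N \<ge> 1 \<longrightarrow> finite A \<longrightarrow> card A \<le> N \<longrightarrow> (\<forall>n\<in>A. norm (\<epsilon> n) \<le> 1) \<longrightarrow>
           LplogL_norm p \<alpha> c (\<lambda>x. \<Sum>n\<in>A. \<epsilon> n * cis (of_int n * x))
             \<le> K * max (sqrt (real N)) (real N powr (1 - 1 / p) * (ln (exp 1 + real N)) powr \<alpha>)"
  proof (intro allI impI)
    fix N :: nat and A :: "int set" and \<epsilon> :: "int \<Rightarrow> complex"
    assume N: "N \<ge> 1" and A: "finite A" and cA: "card A \<le> N" and e: "\<forall>n\<in>A. norm (\<epsilon> n) \<le> 1"
    define f where "f x = (\<Sum>n\<in>A. \<epsilon> n * cis (of_int n * x))" for x
    have x: "real N \<ge> 1" using N by simp
    have fb: "\<forall>y. norm (f y) \<le> real N"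
    proof
      fix y
      have "norm (f y) \<le> (\<Sum>n\<in>A. norm (\<epsilon> n * cis (of_int n * y)))" unfolding f_def by (rule norm_sum)
      also have "\<dots> \<le> (\<Sum>n\<in>A. 1)" using e by (intro sum_mono) (simp add: norm_mult)
      also have "\<dots> \<le> real N" using cA by simp
      finally show "norm (f y) \<le> real N" .
    qed
    have I: "((\<lambda>y. (norm (f y))^2) has_integral (2*pi*(\<Sum>n\<in>A. (norm (\<epsilon> n))^2))) {-pi..pi}"
      unfolding f_def by (rule parseval_sum[OF A])
    have "(\<Sum>n\<in>A. (norm (\<epsilon> n))^2) \<le> (\<Sum>n\<in>A. 1)"
      using e by (intro sum_mono) (simp add: power_le_one)
    also have "\<dots> \<le> real N" using cA by simp
    finally have "2*pi*(\<Sum>n\<in>A. (norm (\<epsilon> n))^2) \<le> 2*pi*real N" by simp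
    then have "luxemburg_norm (LlogL_Phi p \<alpha> c) f \<le> K * Rf p \<alpha> (real N)"
      using K(2) x fb I unfolding good_def by blast
    then show "LplogL_norm p \<alpha> c (\<lambda>x. \<Sum>n\<in>A. \<epsilon> n * cis (of_int n * x))
             \<le> K * max (sqrt (real N)) (real N powr (1 - 1 / p) * (ln (exp 1 + real N)) powr \<alpha>)"
      unfolding LplogL_norm_def Rf_def f_def by simp
  qed
  then show ?thesis using K(1) by (intro exI[of _ K]) auto
qed

end
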